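(* Let $Q$ be a finite poset, $X_Q$ its cube complex, and let $C(I_i,M_i)$ and $C(I_{i+1},M_{i+1})$ be consecutive cubes $P_i, P_{i+1}$ of a valid cube sequence in $X_Q$. Then every maximal cube of the interval $X[P_i,P_{i+1}]$ contains the vertex corresponding to the order ideal $I_i$.
   Context: For a finite poset $Q$, $X_Q$ is the cube complex whose vertices are the order ideals of $Q$ and with a cube $C(I,M)$ for each order ideal $I$ and subset $M$ of the set of maximal elements of $I$, whose vertices are $I\setminus S$, $S\subseteq M$. A valid cube sequence is a sequence of cubes $C(I_1,M_1),\dots,C(I_k,M_k)$ of $X_Q$ such that (a) $I_1\subset\cdots\subset I_k=Q$; (b) $I_1=M_1$ and $I_j\setminus I_{j-1}\subseteq M_j$ for $1<j\le k$; (c) each $M_j$ is a maximal antichain of $Q$. For cubes $C,D$, the interval $X[C,D]$ is the subcomplex consisting of all cubes all of whose vertices lie on at least one edge geodesic (shortest path along edges) between a vertex of $C$ and a vertex of $D$. *)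

theory Defs
  imports Main
begin

text \<open>A finite poset is a finite carrier Q with a partial order r on Q
  (partial_order_on Q r); x is below y iff (x,y) in r.\<close>

definition order_ideal :: "'a set \<Rightarrow> 'a rel \<Rightarrow> 'a set \<Rightarrow> bool" where
  "order_ideal Q r I \<longleftrightarrow> I \<subseteq> Q \<and> (\<forall>x\<in>I. \<forall>y. (y, x) \<in> r \<longrightarrow> y \<in> I)"

definition maximal_elems :: "'a rel \<Rightarrow> 'a set \<Rightarrow> 'a set" where
  "maximal_elems r I = {x \<in> I. \<forall>y\<in>I. (x, y) \<in> r \<longrightarrow> y = x}"

definition antichain :: "'a set \<Rightarrow> 'a rel \<Rightarrow> 'a set \<Rightarrow> bool" where
  "antichain Q r A \<longleftrightarrow> A \<subseteq> Q \<and> (\<forall>x\<in>A. \<forall>y\<in>A. (x, y) \<in> r \<longrightarrow> x = y)"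

definition maximal_antichain :: "'a set \<Rightarrow> 'a rel \<Rightarrow> 'a set \<Rightarrow> bool" where
  "maximal_antichain Q r A \<longleftrightarrow> antichain Q r A \<and>
     (\<forall>B. antichain Q r B \<and> A \<subseteq> B \<longrightarrow> B = A)"

definition is_cube :: "'a set \<Rightarrow> 'a rel \<Rightarrow> 'a set \<Rightarrow> 'a set \<Rightarrow> bool" where
  "is_cube Q r I M \<longleftrightarrow> order_ideal Q r I \<and> M \<subseteq> maximal_elems r I"

definition cube_verts :: "'a set \<Rightarrow> 'a set \<Rightarrow> 'a set set" where
  "cube_verts I M = {I - S | S. S \<subseteq> M}"

definition adjacent :: "'a set \<Rightarrow> 'a rel \<Rightarrow> 'a set \<Rightarrow> 'a set \<Rightarrow> bool" where
  "adjacent Q r J K \<longleftrightarrow>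
     (\<exists>m. is_cube Q r J {m} \<and> K = J - {m}) \<or> (\<exists>m. is_cube Q r K {m} \<and> J = K - {m})"

text \<open>An edge path from u to v, as the list of its vertices; its length is length p - 1.\<close>
definition edge_path :: "'a set \<Rightarrow> 'a rel \<Rightarrow> 'a set list \<Rightarrow> 'a set \<Rightarrow> 'a set \<Rightarrow> bool" where
  "edge_path Q r p u v \<longleftrightarrow> p \<noteq> [] \<and> hd p = u \<and> last p = v \<and>
     (\<forall>w\<in>set p. order_ideal Q r w) \<and>
     (\<forall>i. Suc i < length p \<longrightarrow> adjacent Q r (p ! i) (p ! Suc i))"

definition geodesic :: "'a set \<Rightarrow> 'a rel \<Rightarrow> 'a set list \<Rightarrow> 'a set \<Rightarrow> 'a set \<Rightarrow> bool" where
  "geodesic Q r p u v \<longleftrightarrow> edge_path Q r p u v \<and>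
     (\<forall>q. edge_path Q r q u v \<longrightarrow> length p \<le> length q)"

definition in_interval :: "'a set \<Rightarrow> 'a rel \<Rightarrow> 'a set \<times> 'a set \<Rightarrow> 'a set \<times> 'a set
     \<Rightarrow> 'a set \<times> 'a set \<Rightarrow> bool" where
  "in_interval Q r C D E \<longleftrightarrow> is_cube Q r (fst E) (snd E) \<and>
     (\<forall>w\<in>cube_verts (fst E) (snd E).
        \<exists>c\<in>cube_verts (fst C) (snd C). \<exists>d\<in>cube_verts (fst D) (snd D).
          \<exists>p. geodesic Q r p c d \<and> w \<in> set p)"

definition maximal_in_interval :: "'a set \<Rightarrow> 'a rel \<Rightarrow> 'a set \<times> 'a set \<Rightarrow> 'a set \<times> 'a set
     \<Rightarrow> 'a set \<times> 'a set \<Rightarrow> bool" where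
  "maximal_in_interval Q r C D E \<longleftrightarrow> in_interval Q r C D E \<and>
     (\<forall>E'. in_interval Q r C D E' \<longrightarrow>
        \<not> (cube_verts (fst E) (snd E) \<subset> cube_verts (fst E') (snd E')))"

text \<open>Valid cube sequence C(I_1,M_1),...,C(I_k,M_k), as a list (0-indexed).\<close>
definition valid_cube_seq :: "'a set \<Rightarrow> 'a rel \<Rightarrow> ('a set \<times> 'a set) list \<Rightarrow> bool" where
  "valid_cube_seq Q r cs \<longleftrightarrow> cs \<noteq> [] \<and>
     (\<forall>c\<in>set cs. is_cube Q r (fst c) (snd c)) \<and>
     (\<forall>j. Suc j < length cs \<longrightarrow> fst (cs ! j) \<subset> fst (cs ! Suc j)) \<and>
     fst (last cs) = Q \<and>
     fst (cs ! 0) = snd (cs ! 0) \<and>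
     (\<forall>j. Suc j < length cs \<longrightarrow> fst (cs ! Suc j) - fst (cs ! j) \<subseteq> snd (cs ! Suc j)) \<and>
     (\<forall>c\<in>set cs. maximal_antichain Q r (snd c))"

end

theory Submission imports Defs begin

definition sd :: "'a set \<Rightarrow> 'a set \<Rightarrow> 'a set" where
  "sd a b = (a - b) \<union> (b - a)"

fun chn :: "'a set \<Rightarrow> 'a rel \<Rightarrow> 'a set list \<Rightarrow> bool" where
  "chn Q r [] = True"
| "chn Q r [x] = True"
| "chn Q r (x # y # xs) = (adjacent Q r x y \<and> chn Q r (y # xs))"

lemma chn_iff: "chn Q r p \<longleftrightarrow> (\<forall>i. Suc i < length p \<longrightarrow> adjacent Q r (p!i) (p!Suc i))"
proof (induction Q r p rule: chn.induct)
  case (3 Q r x y xs)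
  have "(\<forall>i. Suc i < length (x#y#xs) \<longrightarrow> adjacent Q r ((x#y#xs)!i) ((x#y#xs)!Suc i)) \<longleftrightarrow>
        adjacent Q r x y \<and> (\<forall>i. Suc i < length (y#xs) \<longrightarrow> adjacent Q r ((y#xs)!i) ((y#xs)!Suc i))"
    (is "?L \<longleftrightarrow> ?R")
  proof
    assume ?L then show ?R by (metis Suc_less_eq length_Cons nth_Cons_0 nth_Cons_Suc zero_less_Suc)
  next
    assume R: ?R
    show ?L
    proof (intro allI impI)
      fix i assume "Suc i < length (x#y#xs)"
      then show "adjacent Q r ((x#y#xs)!i) ((x#y#xs)!Suc i)"
        using R by (cases i) auto
    qed
  qed
  then show ?case using 3 by simp
qed auto

lemma adj_sym: "adjacent Q r a b = adjacent Q r b a"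
  unfolding adjacent_def by blast

lemma adj_sd: "adjacent Q r a b \<Longrightarrow> card (sd a b) = 1"
proof -
  assume "adjacent Q r a b"
  then obtain m where "sd a b = {m}"
    unfolding adjacent_def is_cube_def maximal_elems_def sd_def by blast
  then show ?thesis by simp
qed

lemma tri: "finite a \<Longrightarrow> finite b \<Longrightarrow> finite c \<Longrightarrow> card (sd a c) \<le> card (sd a b) + card (sd b c)"
proof -
  assume f: "finite a" "finite b" "finite c"
  have "sd a c \<subseteq> sd a b \<union> sd b c" unfolding sd_def by blast
  then have "card (sd a c) \<le> card (sd a b \<union> sd b c)"
    by (rule card_mono[rotated]) (use f in \<open>simp add: sd_def\<close>)
  also have "\<dots> \<le> card (sd a b) + card (sd b c)" by (rule card_Un_le)
  finally show ?thesis .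
qed

lemma path_bound:
  "finite Q \<Longrightarrow> chn Q r p \<Longrightarrow> \<forall>x\<in>set p. x \<subseteq> Q \<Longrightarrow> w \<in> set p \<Longrightarrow>
   card (sd (hd p) w) + card (sd w (last p)) \<le> length p - 1"
proof (induction Q r p arbitrary: w rule: chn.induct)
  case (2 Q r x)
  then show ?case by (simp add: sd_def)
next
  case (3 Q r x y xs)
  have fx: "finite x" "finite y" using 3 finite_subset by auto
  have fl: "finite (last (y#xs))" using 3 finite_subset by (metis last_in_set list.distinct(1) set_subset_Cons subsetD)
  have adj: "card (sd x y) = 1" using 3 adj_sd by auto
  show ?case
  proof (cases "w = x")
    case True
    have "card (sd y (last (y#xs))) + card (sd (last (y#xs)) (last (y#xs))) \<le> length (y#xs) - 1"
      using "3.IH"[of "last (y#xs)"] 3 by auto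
    moreover have "card (sd x (last (y#xs))) \<le> card (sd x y) + card (sd y (last (y#xs)))"
      using fx fl by (rule tri)
    ultimately show ?thesis using True adj by (simp add: sd_def)
  next
    case False
    then have w: "w \<in> set (y#xs)" using 3 by auto
    have fw: "finite w" using 3 finite_subset by auto
    have "card (sd y w) + card (sd w (last (y#xs))) \<le> length (y#xs) - 1"
      using "3.IH"[of w] 3 w by auto
    moreover have "card (sd x w) \<le> card (sd x y) + card (sd y w)"
      using fx fw by (intro tri) auto
    ultimately show ?thesis using adj by simp
  qed
qed auto

lemma chn_snoc: "chn Q r p \<Longrightarrow> p \<noteq> [] \<Longrightarrow> adjacent Q r (last p) y \<Longrightarrow> chn Q r (p @ [y])"
  by (induction Q r p rule: chn.induct) auto

lemma chn_append: "chn Q r xs \<Longrightarrow> chn Q r ys \<Longrightarrow> xs \<noteq> [] \<Longrightarrow> ys \<noteq> [] \<Longrightarrow> last xs = hd ys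
   \<Longrightarrow> chn Q r (xs @ tl ys)"
proof (induction Q r xs rule: chn.induct)
  case (2 Q r x)
  then show ?case by (cases ys) auto
next
  case (3 Q r x y xs)
  then show ?case by (cases "xs @ tl ys") auto
qed auto

lemma chn_rev: "chn Q r xs \<Longrightarrow> chn Q r (rev xs)"
proof (induction Q r xs rule: chn.induct)
  case (3 Q r x y xs)
  then have "chn Q r (rev (y#xs) @ [x])"
    by (intro chn_snoc) (auto simp: adj_sym)
  then show ?case by simp
qed auto

lemma max_elem:
  assumes "finite S" "S \<noteq> {}" "S \<subseteq> Q" "partial_order_on Q r"
  shows "\<exists>x\<in>S. \<forall>y\<in>S. (x,y)\<in>r \<longrightarrow> y = x"
proof -
  define f where "f x = card {y\<in>S. (x,y)\<in>r}" for x
  obtain x0 where "x0 \<in> S" using assms by blast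
  obtain x where x: "x \<in> S" and mn: "\<forall>y. y \<in> S \<longrightarrow> f x \<le> f y"
    using ex_has_least_nat[of "\<lambda>x. x \<in> S" x0 f] \<open>x0 \<in> S\<close> by blast
  have refl: "refl_on Q r" and tr: "trans r" and an: "antisym r"
    using partial_order_onD[OF assms(4)] by auto
  show ?thesis
  proof (intro bexI[OF _ x] ballI impI)
    fix y assume y: "y \<in> S" "(x,y) \<in> r"
    show "y = x"
    proof (rule ccontr)
      assume ne: "y \<noteq> x"
      have "{z\<in>S. (y,z)\<in>r} \<subset> {z\<in>S. (x,z)\<in>r}"
      proof
        show "{z\<in>S. (y,z)\<in>r} \<subseteq> {z\<in>S. (x,z)\<in>r}" using y tr unfolding trans_def by blast
        have "x \<in> {z\<in>S. (x,z)\<in>r}" using x refl assms(3) unfolding refl_on_def by blast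
        moreover have "x \<notin> {z\<in>S. (y,z)\<in>r}" using y ne an unfolding antisym_def by blast
        ultimately show "{z\<in>S. (y,z)\<in>r} \<noteq> {z\<in>S. (x,z)\<in>r}" by blast
      qed
      then have "f y < f x" unfolding f_def by (rule psubset_card_mono[rotated]) (use assms in auto)
      then show False using mn y by fastforce
    qed
  qed
qed

lemma edge_path_chn: "edge_path Q r p u v \<longleftrightarrow> p \<noteq> [] \<and> hd p = u \<and> last p = v \<and>
     (\<forall>w\<in>set p. order_ideal Q r w) \<and> chn Q r p"
  unfolding edge_path_def chn_iff by blast

lemma up_path:
  assumes fin: "finite Q" and po: "partial_order_on Q r" and u: "order_ideal Q r u"
  shows "order_ideal Q r v \<Longrightarrow> u \<subseteq> v \<Longrightarrow> \<exists>p. chn Q r p \<and> p \<noteq> [] \<and> hd p = u \<and> last p = v \<and>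
     (\<forall>x\<in>set p. order_ideal Q r x) \<and> length p = card (v - u) + 1"
proof (induction "card (v - u)" arbitrary: v)
  case 0
  have "finite (v - u)" using 0 fin finite_subset unfolding order_ideal_def by blast
  then have "v = u" using 0 by auto
  then show ?case using u by (intro exI[of _ "[u]"]) auto
next
  case (Suc n)
  have vQ: "v \<subseteq> Q" using Suc unfolding order_ideal_def by blast
  have fvu: "finite (v - u)" using vQ fin finite_subset by blast
  have "v - u \<noteq> {}" using Suc by auto
  then obtain x where x: "x \<in> v - u" and xm: "\<forall>y\<in>v - u. (x,y)\<in>r \<longrightarrow> y = x"
    using max_elem[OF fvu _ _ po] vQ by blast
  have xmax: "x \<in> maximal_elems r v"
    unfolding maximal_elems_def
  proof (intro CollectI conjI ballI impI)
    show "x \<in> v" using x by blast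
    fix y assume "y \<in> v" "(x,y) \<in> r"
    then show "y = x" using xm x u unfolding order_ideal_def by blast
  qed
  define v' where "v' = v - {x}"
  have cube: "is_cube Q r v {x}" using Suc xmax unfolding is_cube_def by blast
  have v'i: "order_ideal Q r v'"
    unfolding order_ideal_def v'_def
  proof (intro conjI ballI allI impI)
    show "v - {x} \<subseteq> Q" using vQ by blast
    fix z y assume z: "z \<in> v - {x}" and yz: "(y,z) \<in> r"
    have "y \<in> v" using Suc z yz unfolding order_ideal_def by blast
    moreover have "y \<noteq> x" using xmax z yz unfolding maximal_elems_def by blast
    ultimately show "y \<in> v - {x}" by blast
  qed
  have uv': "u \<subseteq> v'" using Suc x unfolding v'_def by blast
  have "card (v' - u) = n"
  proof -
    have "v' - u = (v - u) - {x}" unfolding v'_def by blast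
    then show ?thesis using Suc(2) x fvu by simp
  qed
  then obtain p where p: "chn Q r p" "p \<noteq> []" "hd p = u" "last p = v'"
     "\<forall>x\<in>set p. order_ideal Q r x" "length p = card (v' - u) + 1"
    using Suc(1)[OF _ v'i uv'] by metis
  have adj: "adjacent Q r (last p) v" using p cube unfolding adjacent_def v'_def by blast
  show ?case
  proof (intro exI[of _ "p @ [v]"] conjI)
    show "chn Q r (p @ [v])" using chn_snoc p adj by blast
    show "length (p @ [v]) = card (v - u) + 1" using p \<open>card (v' - u) = n\<close> Suc(2) by simp
  qed (use p Suc in auto)
qed

lemma ideal_Int: "order_ideal Q r a \<Longrightarrow> order_ideal Q r b \<Longrightarrow> order_ideal Q r (a \<inter> b)"
  unfolding order_ideal_def by blast

lemma full_path:
  assumes fin: "finite Q" and po: "partial_order_on Q r"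
    and c: "order_ideal Q r c" and d: "order_ideal Q r d"
  shows "\<exists>p. edge_path Q r p c d \<and> length p = card (sd c d) + 1"
proof -
  have i: "order_ideal Q r (c \<inter> d)" using ideal_Int c d .
  obtain p1 where p1: "chn Q r p1" "p1 \<noteq> []" "hd p1 = c \<inter> d" "last p1 = c"
     "\<forall>x\<in>set p1. order_ideal Q r x" "length p1 = card (c - c \<inter> d) + 1"
    using up_path[OF fin po i c] by blast
  obtain p2 where p2: "chn Q r p2" "p2 \<noteq> []" "hd p2 = c \<inter> d" "last p2 = d"
     "\<forall>x\<in>set p2. order_ideal Q r x" "length p2 = card (d - c \<inter> d) + 1"
    using up_path[OF fin po i d] by blast
  define p where "p = rev p1 @ tl p2"
  have "chn Q r p" unfolding p_def using p1 p2
    by (intro chn_append chn_rev) (auto simp: last_rev)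
  moreover have "p \<noteq> []" "hd p = c" using p1 unfolding p_def by (auto simp: hd_rev)
  moreover have "last p = d"
  proof (cases "tl p2 = []")
    case True
    then have "p2 = [c \<inter> d]" using p2 by (cases p2) auto
    then show ?thesis using True p1 p2 unfolding p_def by (auto simp: last_rev)
  next
    case False
    then show ?thesis using p2 unfolding p_def by (cases p2) auto
  qed
  moreover have "\<forall>x\<in>set p. order_ideal Q r x" using p1 p2 unfolding p_def
    by (auto dest: list.set_sel(2))
  moreover have "length p = card (sd c d) + 1"
  proof -
    have fc: "finite c" "finite d" using c d fin finite_subset unfolding order_ideal_def by blast+
    have "card (sd c d) = card (c - d) + card (d - c)"
      unfolding sd_def using fc by (intro card_Un_disjoint) auto
    moreover have "c - c \<inter> d = c - d" "d - c \<inter> d = d - c" by auto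
    ultimately show ?thesis using p1 p2 unfolding p_def by simp
  qed
  ultimately show ?thesis unfolding edge_path_chn by blast
qed

lemma geo_between:
  assumes fin: "finite Q" and po: "partial_order_on Q r"
    and g: "geodesic Q r p c d" and w: "w \<in> set p"
  shows "c \<inter> d \<subseteq> w \<and> w \<subseteq> c \<union> d"
proof -
  have ep: "edge_path Q r p c d" using g unfolding geodesic_def by blast
  then have pp: "p \<noteq> []" "hd p = c" "last p = d" "\<forall>w\<in>set p. order_ideal Q r w" "chn Q r p"
    unfolding edge_path_chn by auto
  have ci: "order_ideal Q r c" "order_ideal Q r d" using pp by auto
  obtain q where q: "edge_path Q r q c d" "length q = card (sd c d) + 1"
    using full_path[OF fin po ci] by blast
  have lp: "length p \<le> card (sd c d) + 1" using g q unfolding geodesic_def by metis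
  have sub: "\<forall>x\<in>set p. x \<subseteq> Q" using pp unfolding order_ideal_def by blast
  have b: "card (sd c w) + card (sd w d) \<le> length p - 1"
    using path_bound[OF fin pp(5) sub w] pp by simp
  have fs: "finite (sd c w)" "finite (sd w d)" "finite (sd c d)"
    using sub w pp fin finite_subset unfolding sd_def
    by (metis finite_Diff finite_UnI hd_in_set last_in_set)+
  have "sd c d \<subseteq> sd c w \<union> sd w d" unfolding sd_def by blast
  then have "card (sd c d) \<le> card (sd c w \<union> sd w d)" using fs by (intro card_mono) auto
  moreover have "card (sd c w \<union> sd w d) + card (sd c w \<inter> sd w d) = card (sd c w) + card (sd w d)"
    using fs card_Un_Int by metis
  ultimately have "card (sd c w \<inter> sd w d) = 0" using b lp by linarith
  then have "sd c w \<inter> sd w d = {}" using fs by simp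
  then show ?thesis unfolding sd_def by blast
qed

lemma geo_on:
  assumes fin: "finite Q" and po: "partial_order_on Q r"
    and L: "order_ideal Q r L" and J: "order_ideal Q r J" and w: "order_ideal Q r w"
    and "L \<subseteq> w" "w \<subseteq> J"
  shows "\<exists>p. geodesic Q r p L J \<and> w \<in> set p"
proof -
  obtain p1 where p1: "chn Q r p1" "p1 \<noteq> []" "hd p1 = L" "last p1 = w"
     "\<forall>x\<in>set p1. order_ideal Q r x" "length p1 = card (w - L) + 1"
    using up_path[OF fin po L w] assms by blast
  obtain p2 where p2: "chn Q r p2" "p2 \<noteq> []" "hd p2 = w" "last p2 = J"
     "\<forall>x\<in>set p2. order_ideal Q r x" "length p2 = card (J - w) + 1"
    using up_path[OF fin po w J] assms by blast
  define p where "p = p1 @ tl p2"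
  have "chn Q r p" unfolding p_def using p1 p2 by (intro chn_append) auto
  moreover have "p \<noteq> []" "hd p = L" using p1 unfolding p_def by auto
  moreover have "last p = J"
  proof (cases "tl p2 = []")
    case True
    then have "p2 = [w]" using p2 by (cases p2) auto
    then show ?thesis using True p1 p2 unfolding p_def by auto
  next
    case False
    then show ?thesis using p2 unfolding p_def by (cases p2) auto
  qed
  moreover have "\<forall>x\<in>set p. order_ideal Q r x" using p1 p2 unfolding p_def
    by (auto dest: list.set_sel(2))
  ultimately have ep: "edge_path Q r p L J" unfolding edge_path_chn by blast
  have fJ: "finite J" using J fin finite_subset unfolding order_ideal_def by blast
  have "card (J - L) = card (w - L) + card (J - w)"
  proof -
    have "J - L = (w - L) \<union> (J - w)" using assms by blast
    moreover have "finite (w - L)" "finite (J - w)" using fJ assms finite_subset by blast+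
    moreover have "(w - L) \<inter> (J - w) = {}" by blast
    ultimately show ?thesis by (metis card_Un_disjoint)
  qed
  then have lp: "length p = card (sd L J) + 1" using p1 p2 assms unfolding p_def sd_def
    by (simp add: Diff_eq_empty_iff[THEN iffD2])
  have "\<forall>q. edge_path Q r q L J \<longrightarrow> length p \<le> length q"
  proof (intro allI impI)
    fix q assume "edge_path Q r q L J"
    then have qq: "q \<noteq> []" "hd q = L" "last q = J" "\<forall>w\<in>set q. order_ideal Q r w" "chn Q r q"
      unfolding edge_path_chn by auto
    have sub: "\<forall>x\<in>set q. x \<subseteq> Q" using qq unfolding order_ideal_def by blast
    have "card (sd L J) + card (sd J J) \<le> length q - 1"
      using path_bound[OF fin qq(5) sub, of J] qq last_in_set[OF qq(1)] by simp
    moreover have "card (sd J J) = 0" by (simp add: sd_def)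
    moreover have "length q > 0" using qq by simp
    ultimately show "length p \<le> length q" using lp by linarith
  qed
  moreover have "w \<in> set p" using p1 unfolding p_def by (metis Un_iff last_in_set set_append)
  ultimately show ?thesis unfolding geodesic_def using ep by blast
qed

lemma cube_vert_ideal: "is_cube Q r A K \<Longrightarrow> U \<subseteq> K \<Longrightarrow> order_ideal Q r (A - U)"
  unfolding is_cube_def order_ideal_def maximal_elems_def by blast

theorem lemma5p3:
  fixes Q :: "'a set" and r :: "'a rel" and cs :: "('a set \<times> 'a set) list" and i :: nat
  assumes "finite Q" and "partial_order_on Q r"
    and "valid_cube_seq Q r cs"
    and "Suc i < length cs"
    and "maximal_in_interval Q r (cs ! i) (cs ! Suc i) E"
  shows "fst (cs ! i) \<in> cube_verts (fst E) (snd E)"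
proof -
  note fin = assms(1) and po = assms(2)
  obtain I M where IM: "cs ! i = (I, M)" by (cases "cs ! i")
  obtain J N where JN: "cs ! Suc i = (J, N)" by (cases "cs ! Suc i")
  obtain A K where AK: "E = (A, K)" by (cases E)
  have ci: "is_cube Q r I M" and cj: "is_cube Q r J N"
    using assms(3,4) IM JN unfolding valid_cube_seq_def
    by (metis Suc_lessD fst_conv nth_mem snd_conv)+
  have IJ1: "I \<subset> J" using assms(3,4) IM JN unfolding valid_cube_seq_def
    by (metis fst_conv)
  have IJ2: "J - I \<subseteq> N" using assms(3,4) IM JN unfolding valid_cube_seq_def
    by (metis fst_conv snd_conv)
  note IJ = IJ1 IJ2
  have mac: "maximal_antichain Q r M" using assms(3,4) IM unfolding valid_cube_seq_def
    by (metis Suc_lessD nth_mem snd_conv)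
  have ac: "\<forall>x\<in>M. \<forall>y\<in>M. (x, y) \<in> r \<longrightarrow> x = y" using mac
    unfolding maximal_antichain_def antichain_def by blast
  have mx: "maximal_in_interval Q r (I, M) (J, N) (A, K)" using assms(5) IM JN AK by simp
  have cA: "is_cube Q r A K" using mx unfolding maximal_in_interval_def in_interval_def by simp
  have Iid: "order_ideal Q r I" and Jid: "order_ideal Q r J"
    and Mmax: "M \<subseteq> maximal_elems r I" and Nmax: "N \<subseteq> maximal_elems r J"
    using ci cj unfolding is_cube_def by auto
  have Aid: "order_ideal Q r A" and Kmax: "K \<subseteq> maximal_elems r A" using cA unfolding is_cube_def by auto
  have NI: "N \<inter> I \<subseteq> M"
  proof
    fix n assume n: "n \<in> N \<inter> I"
    show "n \<in> M"
    proof (rule ccontr)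
      assume nM: "n \<notin> M"
      have "\<exists>m\<in>M. (m, n) \<in> r \<or> (n, m) \<in> r"
      proof (rule ccontr)
        assume "\<not> ?thesis"
        then have "antichain Q r (insert n M)"
          using mac n Iid unfolding maximal_antichain_def antichain_def order_ideal_def by blast
        then have "insert n M = M" using mac unfolding maximal_antichain_def by blast
        then show False using nM by blast
      qed
      then obtain m where m: "m \<in> M" "(m, n) \<in> r \<or> (n, m) \<in> r" by blast
      show False
      proof (cases "(m, n) \<in> r")
        case True
        then have "n = m" using Mmax m n unfolding maximal_elems_def by blast
        then show ?thesis using nM m by blast
      next
        case False
        then have "(n, m) \<in> r" using m by blast
        moreover have "m \<in> J" using m Mmax IJ unfolding maximal_elems_def by blast
        ultimately have "m = n" using Nmax n unfolding maximal_elems_def by blast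
        then show ?thesis using nM m by blast
      qed
    qed
  qed
  define L where "L = I - M"
  have verts: "\<And>w. w \<in> cube_verts A K \<Longrightarrow> L \<subseteq> w \<and> w \<subseteq> J"
  proof -
    fix w assume w: "w \<in> cube_verts A K"
    then obtain c d p where c: "c \<in> cube_verts I M" and d: "d \<in> cube_verts J N"
      and g: "geodesic Q r p c d" and wp: "w \<in> set p"
      using mx unfolding maximal_in_interval_def in_interval_def by auto
    obtain S where S: "c = I - S" "S \<subseteq> M" using c unfolding cube_verts_def by blast
    obtain T where T: "d = J - T" "T \<subseteq> N" using d unfolding cube_verts_def by blast
    have "c \<inter> d \<subseteq> w \<and> w \<subseteq> c \<union> d" using geo_between[OF fin po g wp] .
    moreover have "L \<subseteq> c \<inter> d" using S T NI IJ unfolding L_def by blast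
    moreover have "c \<union> d \<subseteq> J" using S T IJ by blast
    ultimately show "L \<subseteq> w \<and> w \<subseteq> J" by blast
  qed
  have AJ: "A \<subseteq> J" using verts[of A] unfolding cube_verts_def by blast
  have LAK: "L \<subseteq> A - K" using verts[of "A - K"] unfolding cube_verts_def by blast
  have Lid: "order_ideal Q r L"
    unfolding L_def order_ideal_def
  proof (intro conjI ballI allI impI)
    show "I - M \<subseteq> Q" using Iid unfolding order_ideal_def by blast
    fix x y assume x: "x \<in> I - M" and yx: "(y, x) \<in> r"
    have "y \<in> I" using Iid x yx unfolding order_ideal_def by blast
    moreover have "y \<notin> M" using x yx Mmax \<open>y \<in> I\<close> unfolding maximal_elems_def by blast
    ultimately show "y \<in> I - M" by blast
  qed
  have newint: "\<And>A' K'. is_cube Q r A' K' \<Longrightarrow> (\<forall>w\<in>cube_verts A' K'. L \<subseteq> w \<and> w \<subseteq> J)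
      \<Longrightarrow> in_interval Q r (I, M) (J, N) (A', K')"
  proof -
    fix A' K' assume cu: "is_cube Q r A' K'" and vv: "\<forall>w\<in>cube_verts A' K'. L \<subseteq> w \<and> w \<subseteq> J"
    have Lv: "L \<in> cube_verts I M" unfolding cube_verts_def L_def by blast
    have Jv: "J \<in> cube_verts J N" unfolding cube_verts_def by (intro CollectI exI[of _ "{}"]) simp
    show "in_interval Q r (I, M) (J, N) (A', K')"
      unfolding in_interval_def
    proof (intro conjI ballI)
      show "is_cube Q r (fst (A', K')) (snd (A', K'))" using cu by simp
      fix w assume w: "w \<in> cube_verts (fst (A', K')) (snd (A', K'))"
      then obtain U where U: "w = A' - U" "U \<subseteq> K'" unfolding cube_verts_def by auto
      have wi: "order_ideal Q r w" using cube_vert_ideal[OF cu U(2)] U by simp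
      have lw: "L \<subseteq> w" "w \<subseteq> J" using vv w by auto
      obtain p where "geodesic Q r p L J" "w \<in> set p"
        using geo_on[OF fin po Lid Jid wi lw] by blast
      then show "\<exists>c\<in>cube_verts (fst (I, M)) (snd (I, M)). \<exists>d\<in>cube_verts (fst (J, N)) (snd (J, N)).
          \<exists>p. geodesic Q r p c d \<and> w \<in> set p" using Lv Jv by auto
    qed
  qed
  have notbigger: "\<And>A' K'. is_cube Q r A' K' \<Longrightarrow> (\<forall>w\<in>cube_verts A' K'. L \<subseteq> w \<and> w \<subseteq> J)
      \<Longrightarrow> \<not> cube_verts A K \<subset> cube_verts A' K'"
  proof -
    fix A' K' assume a1: "is_cube Q r A' K'" and a2: "\<forall>w\<in>cube_verts A' K'. L \<subseteq> w \<and> w \<subseteq> J"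
    have "in_interval Q r (I, M) (J, N) (A', K')" by (rule newint[OF a1 a2])
    then have "\<not> cube_verts (fst (A, K)) (snd (A, K)) \<subset> cube_verts (fst (A', K')) (snd (A', K'))"
      using mx unfolding maximal_in_interval_def by blast
    then show "\<not> cube_verts A K \<subset> cube_verts A' K'" by simp
  qed
  have MA: "M \<subseteq> A"
  proof
    fix m assume m: "m \<in> M"
    show "m \<in> A"
    proof (rule ccontr)
      assume mA: "m \<notin> A"
      have mI: "m \<in> I" using m Mmax unfolding maximal_elems_def by blast
      have cu: "is_cube Q r (insert m A) (insert m K)"
        unfolding is_cube_def order_ideal_def
      proof (intro conjI ballI allI impI)
        show "insert m A \<subseteq> Q" using Aid mI Iid unfolding order_ideal_def by blast
        fix x y assume x: "x \<in> insert m A" and yx: "(y, x) \<in> r"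
        show "y \<in> insert m A"
        proof (cases "x \<in> A")
          case True then show ?thesis using Aid yx unfolding order_ideal_def by blast
        next
          case False
          then have xm: "x = m" using x by blast
          have "y \<in> I" using Iid mI yx xm unfolding order_ideal_def by blast
          show ?thesis
          proof (cases "y \<in> M")
            case True then show ?thesis using ac m yx xm by blast
          next
            case False then show ?thesis using \<open>y \<in> I\<close> LAK unfolding L_def by blast
          qed
        qed
      next
        show "insert m K \<subseteq> maximal_elems r (insert m A)"
        proof
          fix k assume k: "k \<in> insert m K"
          show "k \<in> maximal_elems r (insert m A)"
            unfolding maximal_elems_def
          proof (intro CollectI conjI ballI impI)
            show "k \<in> insert m A" using k Kmax unfolding maximal_elems_def by blast
            fix y assume y: "y \<in> insert m A" and ky: "(k, y) \<in> r"
            show "y = k"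
            proof (cases "k = m")
              case True
              then show ?thesis using y ky Aid mA unfolding order_ideal_def by blast
            next
              case False
              then have kK: "k \<in> K" using k by blast
              show ?thesis
              proof (cases "y \<in> A")
                case True then show ?thesis using kK Kmax ky unfolding maximal_elems_def by blast
              next
                case False
                then have ym: "y = m" using y by blast
                have "k \<in> I" using Iid mI ky ym unfolding order_ideal_def by blast
                show ?thesis
                proof (cases "k \<in> M")
                  case True then show ?thesis using ac m ky ym by blast
                next
                  case False then show ?thesis using \<open>k \<in> I\<close> LAK kK unfolding L_def by blast
                qed
              qed
            qed
          qed
        qed
      qed
      have vv: "\<forall>w\<in>cube_verts (insert m A) (insert m K). L \<subseteq> w \<and> w \<subseteq> J"
      proof
        fix w assume "w \<in> cube_verts (insert m A) (insert m K)"
        then obtain U where U: "w = insert m A - U" "U \<subseteq> insert m K" unfolding cube_verts_def by blast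
        show "L \<subseteq> w \<and> w \<subseteq> J" using U LAK AJ mI IJ m unfolding L_def by blast
      qed
      have "cube_verts A K \<subset> cube_verts (insert m A) (insert m K)"
      proof
        show "cube_verts A K \<subseteq> cube_verts (insert m A) (insert m K)"
        proof
          fix w assume "w \<in> cube_verts A K"
          then obtain U where U: "w = A - U" "U \<subseteq> K" unfolding cube_verts_def by blast
          have "w = insert m A - insert m U" using U mA by blast
          then show "w \<in> cube_verts (insert m A) (insert m K)" unfolding cube_verts_def using U by blast
        qed
        have "insert m A \<in> cube_verts (insert m A) (insert m K)"
          unfolding cube_verts_def by (intro CollectI exI[of _ "{}"]) simp
        moreover have "insert m A \<notin> cube_verts A K" unfolding cube_verts_def using mA by blast
        ultimately show "cube_verts A K \<noteq> cube_verts (insert m A) (insert m K)" by blast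
      qed
      then show False using notbigger[OF cu vv] by blast
    qed
  qed
  have AIK: "A - I \<subseteq> K"
  proof
    fix x assume x: "x \<in> A - I"
    show "x \<in> K"
    proof (rule ccontr)
      assume xK: "x \<notin> K"
      have xN: "x \<in> N" using x AJ IJ by blast
      have cu: "is_cube Q r A (insert x K)"
        using cA xN Nmax AJ x unfolding is_cube_def maximal_elems_def by blast
      have vv: "\<forall>w\<in>cube_verts A (insert x K). L \<subseteq> w \<and> w \<subseteq> J"
      proof
        fix w assume "w \<in> cube_verts A (insert x K)"
        then obtain U where U: "w = A - U" "U \<subseteq> insert x K" unfolding cube_verts_def by blast
        show "L \<subseteq> w \<and> w \<subseteq> J" using U LAK AJ x unfolding L_def by blast
      qed
      have "cube_verts A K \<subset> cube_verts A (insert x K)"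
      proof
        show "cube_verts A K \<subseteq> cube_verts A (insert x K)" unfolding cube_verts_def by blast
        have "A - {x} \<in> cube_verts A (insert x K)" unfolding cube_verts_def by blast
        moreover have "A - {x} \<notin> cube_verts A K"
        proof
          assume "A - {x} \<in> cube_verts A K"
          then obtain U where U: "A - {x} = A - U" "U \<subseteq> K" unfolding cube_verts_def by blast
          then have "x \<in> U" using x by blast
          then show False using U xK by blast
        qed
        ultimately show "cube_verts A K \<noteq> cube_verts A (insert x K)" by blast
      qed
      then show False using notbigger[OF cu vv] by blast
    qed
  qed
  have "I \<subseteq> A" using MA LAK unfolding L_def by blast
  then have "I = A - (A - I)" by blast
  then have "I \<in> cube_verts A K" unfolding cube_verts_def using AIK by blast
  then show ?thesis using IM AK by simp
qed

end
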